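(* Let $G=(V,E)$ be a connected, locally finite, nonamenable, transitive graph in which every vertex has degree $d\ge3$. Let $S\subset V$ be nonempty and finite, $p\in(0,1]$, $\mu\in(0,1/2]$, and let $\bm\eta=(\eta_t)_{t\in[0,\mu^{-1}]}$ be an environment path such that, for some $\beta>0$, $$\big|\{e\in\partial_E S:\eta_t(e)=1\text{ for all }t\in[\mu^{-1}-1,\mu^{-1}]\}\big|\ge\beta\,|\partial_E S| .$$ Then $$\Phi^{\bm\eta}_S:=\frac1{|S|}\sum_{x\in S}\sum_{y\in V\setminus S}\mathbb P^{\bm\eta}\big(X_{\mu^{-1}}=y\mid X_0=x\big)\;\ge\;\frac{\beta}{de}\,\Phi(G).$$
   Context: Random walk on dynamical percolation: given $p\in(0,1]$ and $\mu>0$, each edge carries an independent rate-$\mu$ Poisson process of refresh times, at which its state is resampled to open with probability $p$ and closed with probability $1-p$; $\eta_t\in\{0,1\}^E$ is the environment at time $t$. The walker $X_t$ attempts jumps at the times of an independent rate-$1$ Poisson process, choosing a uniformly random neighbor and jumping iff the connecting edge is open at that time. $\mathbb P^{\bm\eta}$ denotes the law of the walk conditionally on the environment path $\bm\eta$. $\partial_E S$ is the set of edges with exactly one endpoint in $S$. Cheeger constant: $\Phi(G):=\inf\{|\partial_E W|/\sum_{v\in W}\deg(v): W\subset V\text{ finite, nonempty}\}$; nonamenable means $\Phi(G)>0$. *)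

theory Defs
  imports "HOL-Analysis.Analysis"
begin

definition degree :: "('v \<Rightarrow> 'v \<Rightarrow> bool) \<Rightarrow> 'v \<Rightarrow> nat" where
  "degree adj v = card {w. adj v w}"

definition edges :: "('v \<Rightarrow> 'v \<Rightarrow> bool) \<Rightarrow> 'v set set" where
  "edges adj = {{x, y} | x y. adj x y}"

definition simple_graph :: "('v \<Rightarrow> 'v \<Rightarrow> bool) \<Rightarrow> bool" where
  "simple_graph adj \<longleftrightarrow> (\<forall>x y. adj x y \<longrightarrow> adj y x) \<and> (\<forall>x. \<not> adj x x)"

definition connected_graph :: "('v \<Rightarrow> 'v \<Rightarrow> bool) \<Rightarrow> bool" where
  "connected_graph adj \<longleftrightarrow> (\<forall>x y. adj\<^sup>*\<^sup>* x y)"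

definition locally_finite :: "('v \<Rightarrow> 'v \<Rightarrow> bool) \<Rightarrow> bool" where
  "locally_finite adj \<longleftrightarrow> (\<forall>v. finite {w. adj v w})"

definition graph_automorphism :: "('v \<Rightarrow> 'v \<Rightarrow> bool) \<Rightarrow> ('v \<Rightarrow> 'v) \<Rightarrow> bool" where
  "graph_automorphism adj f \<longleftrightarrow> bij f \<and> (\<forall>a b. adj a b \<longleftrightarrow> adj (f a) (f b))"

definition vertex_transitive :: "('v \<Rightarrow> 'v \<Rightarrow> bool) \<Rightarrow> bool" where
  "vertex_transitive adj \<longleftrightarrow> (\<forall>x y. \<exists>f. graph_automorphism adj f \<and> f x = y)"

definition edge_boundary :: "('v \<Rightarrow> 'v \<Rightarrow> bool) \<Rightarrow> 'v set \<Rightarrow> 'v set set" where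
  "edge_boundary adj S = {{x, y} | x y. adj x y \<and> x \<in> S \<and> y \<notin> S}"

definition cheeger :: "('v \<Rightarrow> 'v \<Rightarrow> bool) \<Rightarrow> real" where
  "cheeger adj = Inf {real (card (edge_boundary adj W)) / real (\<Sum>v\<in>W. degree adj v) | W.
                        finite W \<and> W \<noteq> {}}"

definition nonamenable :: "('v \<Rightarrow> 'v \<Rightarrow> bool) \<Rightarrow> bool" where
  "nonamenable adj \<longleftrightarrow> cheeger adj > 0"

text \<open>An environment path on [0,T]: eta t e is the state (True = open) of edge e at
  time t. As a path of dynamical percolation, each edge changes state only finitely
  often on [0,T] and is right-continuous (cadlag step function).\<close>
definition env_path :: "('v \<Rightarrow> 'v \<Rightarrow> bool) \<Rightarrow> real \<Rightarrow> (real \<Rightarrow> 'v set \<Rightarrow> bool) \<Rightarrow> bool" where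
  "env_path adj T eta \<longleftrightarrow> (\<forall>e\<in>edges adj. \<exists>F. finite F \<and>
      (\<forall>t1 t2. 0 \<le> t1 \<longrightarrow> t1 \<le> t2 \<longrightarrow> t2 \<le> T \<longrightarrow> {t1<..t2} \<inter> F = {} \<longrightarrow> eta t1 e = eta t2 e))"

text \<open>One attempted step of the walker at time t: choose a uniform neighbour, jump iff the
  edge is open at time t.\<close>
definition step_kernel :: "('v \<Rightarrow> 'v \<Rightarrow> bool) \<Rightarrow> (real \<Rightarrow> 'v set \<Rightarrow> bool) \<Rightarrow> real \<Rightarrow> 'v \<Rightarrow> 'v \<Rightarrow> real" where
  "step_kernel adj eta t x z =
     (if z = x then 1 - real (card {w. adj x w \<and> eta t {x, w}}) / real (degree adj x)
      else if adj x z \<and> eta t {x, z} then 1 / real (degree adj x) else 0)"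

text \<open>walk_A adj eta T n s x y = integral over ordered clock times s < t1 < ... < tn < T
  of the product of step kernels from x to y (Poisson representation, without the
  factor exp(-(T-s))).\<close>
primrec walk_A :: "('v \<Rightarrow> 'v \<Rightarrow> bool) \<Rightarrow> (real \<Rightarrow> 'v set \<Rightarrow> bool) \<Rightarrow> real \<Rightarrow> nat \<Rightarrow> real \<Rightarrow> 'v \<Rightarrow> 'v \<Rightarrow> real" where
  "walk_A adj eta T 0 s x y = (if x = y then 1 else 0)"
| "walk_A adj eta T (Suc n) s x y =
     (LINT t:{s..T}|lborel. (\<Sum>z\<in>insert x {w. adj x w}. step_kernel adj eta t x z * walk_A adj eta T n t z y))"

text \<open>Quenched transition probability P^eta(X_T = y | X_0 = x); the clock is a rate-1
  Poisson process.\<close>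
definition trans_prob :: "('v \<Rightarrow> 'v \<Rightarrow> bool) \<Rightarrow> (real \<Rightarrow> 'v set \<Rightarrow> bool) \<Rightarrow> real \<Rightarrow> 'v \<Rightarrow> 'v \<Rightarrow> real" where
  "trans_prob adj eta T x y = exp (- T) * (\<Sum>n. walk_A adj eta T n 0 x y)"

definition quenched_escape :: "('v \<Rightarrow> 'v \<Rightarrow> bool) \<Rightarrow> (real \<Rightarrow> 'v set \<Rightarrow> bool) \<Rightarrow> real \<Rightarrow> 'v set \<Rightarrow> real" where
  "quenched_escape adj eta T S =
     (1 / real (card S)) * (\<Sum>x\<in>S. infsum (\<lambda>y. trans_prob adj eta T x y) (- S))"

end

theory Submission
  imports Defs
begin

primrec reach :: "('v \<Rightarrow> 'v \<Rightarrow> bool) \<Rightarrow> nat \<Rightarrow> 'v \<Rightarrow> 'v set" where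
  "reach adj 0 x = {x}"
| "reach adj (Suc n) x = (\<Union>z\<in>insert x {w. adj x w}. reach adj n z)"

locale wsetup =
  fixes adj :: "'v \<Rightarrow> 'v \<Rightarrow> bool" and d :: nat and eta :: "real \<Rightarrow> 'v set \<Rightarrow> bool" and T0 :: real
  assumes sg: "simple_graph adj" and lf: "locally_finite adj"
    and deg: "\<forall>v. degree adj v = d" and dpos: "d > 0"
    and env: "env_path adj T0 eta"
begin

abbreviation K where "K \<equiv> step_kernel adj eta"
abbreviation A where "A \<equiv> walk_A adj eta"
abbreviation NB where "NB x \<equiv> insert x {w. adj x w}"

lemma sym: "adj x y \<Longrightarrow> adj y x" using sg by (auto simp: simple_graph_def)
lemma irr: "\<not> adj x x" using sg by (auto simp: simple_graph_def)
lemma finN[simp]: "finite {w. adj x w}" using lf by (auto simp: locally_finite_def)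
lemma finNB: "finite (NB x)" using finN by simp
lemma cardN: "card {w. adj x w} = d" using deg by (auto simp: degree_def)

lemma K_def2: "K t x z = (if z = x then 1 - real (card {w. adj x w \<and> eta t {x, w}}) / real d
      else if adj x z \<and> eta t {x, z} then 1 / real d else 0)"
  using deg by (simp add: step_kernel_def)

lemma card_open: "card {w. adj x w \<and> eta t {x, w}} \<le> d"
proof -
  have "card {w. adj x w \<and> eta t {x, w}} \<le> card {w. adj x w}"
    by (rule card_mono[OF finN]) auto
  then show ?thesis using cardN by simp
qed

lemma K_nonneg: "0 \<le> K t x z"
  using card_open[of x t] dpos by (auto simp: K_def2 field_simps)

lemma K_zero: "z \<noteq> x \<Longrightarrow> \<not> adj x z \<Longrightarrow> K t x z = 0"
  by (simp add: K_def2)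

lemma K_sym: "K t x z = K t z x"
proof (cases "z = x")
  case False
  have "adj x z = adj z x" using sym by blast
  moreover have "{x,z} = {z,x}" by blast
  ultimately show ?thesis using False by (simp add: K_def2)
qed simp

lemma K_sum: "(\<Sum>z\<in>NB x. K t x z) = 1"
proof -
  have xn: "x \<notin> {w. adj x w}" using irr by auto
  have seq: "{z\<in>{w. adj x w}. eta t {x, z}} = {w. adj x w \<and> eta t {x, w}}" by auto
  have "(\<Sum>z\<in>NB x. K t x z) = K t x x + (\<Sum>z\<in>{w. adj x w}. K t x z)"
    using xn finN by simp
  also have "(\<Sum>z\<in>{w. adj x w}. K t x z) = (\<Sum>z\<in>{w. adj x w}. if eta t {x,z} then 1 / real d else 0)"
    by (rule sum.cong) (use irr in \<open>auto simp: K_def2\<close>)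
  also have "\<dots> = (\<Sum>z\<in>{w. adj x w \<and> eta t {x, w}}. 1 / real d)"
    unfolding seq[symmetric] by (rule sum.inter_filter[symmetric, OF finN])
  also have "\<dots> = real (card {w. adj x w \<and> eta t {x, w}}) / real d" by simp
  finally show ?thesis by (simp add: K_def2)
qed

lemma K_le1: "K t x z \<le> 1"
proof (cases "z \<in> NB x")
  case True
  have "K t x z \<le> (\<Sum>z\<in>NB x. K t x z)"
    by (rule member_le_sum[OF True]) (auto simp: K_nonneg finNB)
  then show ?thesis using K_sum by simp
next
  case False then show ?thesis by (simp add: K_zero)
qed

lemma K_sum_big: "finite B \<Longrightarrow> NB x \<subseteq> B \<Longrightarrow> (\<Sum>z\<in>B. K t x z * h z) = (\<Sum>z\<in>NB x. K t x z * h z)"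
  by (rule sum.mono_neutral_right) (auto simp: K_zero)

lemma K_rowsum_le: "finite X \<Longrightarrow> (\<Sum>z\<in>X. K t x z) \<le> 1"
proof -
  assume X: "finite X"
  have "(\<Sum>z\<in>X. K t x z) = (\<Sum>z\<in>X \<inter> NB x. K t x z)"
    by (rule sum.mono_neutral_right) (auto simp: X K_zero)
  also have "\<dots> \<le> (\<Sum>z\<in>NB x. K t x z)"
    by (rule sum_mono2) (auto simp: finNB K_nonneg)
  finally show ?thesis using K_sum by simp
qed

lemma K_colsum_le: "finite X \<Longrightarrow> (\<Sum>x\<in>X. K t x z) \<le> 1"
  using K_rowsum_le[of X t z] by (simp add: K_sym)

lemma reach_fin: "finite (reach adj n x)"
  by (induction n arbitrary: x) (auto simp: finNB)

lemma reach_sub: "z \<in> NB x \<Longrightarrow> reach adj n z \<subseteq> reach adj (Suc n) x"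
  by auto

lemma A_supp: "y \<notin> reach adj n x \<Longrightarrow> A T n s x y = 0"
proof (induction n arbitrary: x s)
  case 0 then show ?case by auto
next
  case (Suc n)
  have "\<And>t. (\<Sum>z\<in>NB x. K t x z * A T n t z y) = 0"
    by (rule sum.neutral) (use Suc in auto)
  then show ?case by simp
qed

lemma A_nonneg: "0 \<le> A T n s x y"
proof (induction n arbitrary: x s)
  case 0 then show ?case by auto
next
  case (Suc n)
  have "0 \<le> (\<Sum>z\<in>NB x. K t x z * A T n t z y)" for t
    by (rule sum_nonneg) (use Suc K_nonneg in auto)
  then show ?case unfolding walk_A.simps set_lebesgue_integral_def
    by (intro integral_nonneg_AE) (auto simp: indicator_def)
qed

end

context wsetup begin

lemma edge_meas:
  assumes e: "e \<in> edges adj"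
  shows "{\<tau>\<in>{0..T0}. eta \<tau> e} \<in> sets borel"
proof -
  have ex: "\<exists>F. finite F \<and> (\<forall>t1 t2. 0 \<le> t1 \<longrightarrow> t1 \<le> t2 \<longrightarrow> t2 \<le> T0 \<longrightarrow>
      {t1<..t2} \<inter> F = {} \<longrightarrow> eta t1 e = eta t2 e)"
    using bspec[OF env[unfolded env_path_def] e] .
  then obtain F where F: "finite F" and FP0: "\<forall>t1 t2. 0 \<le> t1 \<longrightarrow> t1 \<le> t2 \<longrightarrow> t2 \<le> T0 \<longrightarrow>
      {t1<..t2} \<inter> F = {} \<longrightarrow> eta t1 e = eta t2 e" by blast
  note FP = FP0[rule_format]
  define E where "E = {\<tau>\<in>{0..T0}. eta \<tau> e}"
  define G where "G = {0..T0} - F"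
  have "openin (top_of_set G) (E \<inter> G)"
    unfolding openin_euclidean_subtopology_iff
  proof (intro conjI ballI)
    show "E \<inter> G \<subseteq> G" by auto
    fix \<tau> assume \<tau>: "\<tau> \<in> E \<inter> G"
    then have tF: "\<tau> \<notin> F" by (auto simp: G_def)
    obtain \<delta> where dp: "\<delta> > 0" and dd: "\<forall>p\<in>F. p \<noteq> \<tau> \<longrightarrow> \<delta> \<le> dist \<tau> p"
      using finite_set_avoid[OF F, of \<tau>] by blast
    show "\<exists>e>0. \<forall>x'\<in>G. dist x' \<tau> < e \<longrightarrow> x' \<in> E \<inter> G"
    proof (intro exI[of _ \<delta>] conjI ballI impI dp)
      fix x' assume x': "x' \<in> G" "dist x' \<tau> < \<delta>"
      have "eta x' e = eta \<tau> e"
      proof (cases "\<tau> \<le> x'")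
        case True
        have "{\<tau><..x'} \<inter> F = {}"
        proof (rule ccontr)
          assume "{\<tau><..x'} \<inter> F \<noteq> {}"
          then obtain p where p: "p \<in> F" "\<tau> < p" "p \<le> x'" by auto
          then have "\<delta> \<le> dist \<tau> p" using dd by auto
          moreover have "dist \<tau> p \<le> dist x' \<tau>" using p by (simp add: dist_real_def)
          ultimately show False using x' by simp
        qed
        then show ?thesis using FP[of \<tau> x'] True \<tau> x' by (auto simp: G_def)
      next
        case False
        have "{x'<..\<tau>} \<inter> F = {}"
        proof (rule ccontr)
          assume "{x'<..\<tau>} \<inter> F \<noteq> {}"
          then obtain p where p: "p \<in> F" "x' < p" "p \<le> \<tau>" by auto
          then have "p \<noteq> \<tau>" using tF by auto
          then have "\<delta> \<le> dist \<tau> p" using dd p by auto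
          moreover have "dist \<tau> p \<le> dist x' \<tau>" using p by (simp add: dist_real_def)
          ultimately show False using x' by simp
        qed
        then show ?thesis using FP[of x' \<tau>] False \<tau> x' by (auto simp: G_def)
      qed
      then show "x' \<in> E \<inter> G" using x' \<tau> by (auto simp: E_def G_def)
    qed
  qed
  then have "\<exists>U. open U \<and> E \<inter> G = G \<inter> U" by (simp only: openin_open)
  then obtain U where U: "open U" "E \<inter> G = G \<inter> U" by blast
  have "E \<subseteq> G \<union> F" by (auto simp: E_def G_def)
  then have "E = (E \<inter> G) \<union> (E \<inter> F)" by blast
  then have "E = (G \<inter> U) \<union> (E \<inter> F)" using U by simp
  moreover have "G \<inter> U \<in> sets borel"
  proof -
    have "G = {0..T0} \<inter> (- F)" by (auto simp: G_def)
    moreover have "open (- F)" using F finite_imp_closed by (auto simp: open_Compl)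
    ultimately show ?thesis using U by auto
  qed
  moreover have "E \<inter> F \<in> sets borel"
    using F by (intro borel_closed finite_imp_closed) auto
  ultimately show ?thesis unfolding E_def by (metis sets.Un)
qed

definition EE where "EE e = {\<tau>\<in>{0..T0}. eta \<tau> e}"

lemma EE_meas: "adj x w \<Longrightarrow> EE {x, w} \<in> sets borel"
  unfolding EE_def by (rule edge_meas) (auto simp: edges_def)

lemma K_meas:
  assumes T: "T \<le> T0"
  shows "(\<lambda>\<tau>. indicator {0..T} \<tau> * K \<tau> x z) \<in> borel_measurable borel"
proof -
  have eq: "indicator {0..T} \<tau> * K \<tau> x z = indicator {0..T} \<tau> *
     (if z = x then 1 - (\<Sum>w\<in>{w. adj x w}. indicator (EE {x,w}) \<tau>) / real d
      else if adj x z then indicator (EE {x,z}) \<tau> / real d else 0)" for \<tau>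
  proof (cases "\<tau> \<in> {0..T}")
    case True
    then have tin: "\<tau> \<in> {0..T0}" using T by auto
    have seq: "{w\<in>{w. adj x w}. eta \<tau> {x, w}} = {w. adj x w \<and> eta \<tau> {x, w}}" by auto
    have "(\<Sum>w\<in>{w. adj x w}. indicator (EE {x,w}) \<tau> :: real) = (\<Sum>w\<in>{w. adj x w}. if eta \<tau> {x,w} then 1 else 0)"
      using tin by (intro sum.cong) (auto simp: EE_def indicator_def)
    also have "\<dots> = (\<Sum>w\<in>{w. adj x w \<and> eta \<tau> {x, w}}. 1)"
      unfolding seq[symmetric] by (rule sum.inter_filter[symmetric, OF finN])
    also have "(\<Sum>w\<in>{w. adj x w \<and> eta \<tau> {x, w}}. 1) = real (card {w. adj x w \<and> eta \<tau> {x, w}})" by simp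
    finally show ?thesis using tin by (auto simp: K_def2 EE_def indicator_def)
  qed simp
  have m: "(\<lambda>\<tau>. indicator {0..T} \<tau> *
     (if z = x then 1 - (\<Sum>w\<in>{w. adj x w}. indicator (EE {x,w}) \<tau>) / real d
      else if adj x z then indicator (EE {x,z}) \<tau> / real d else (0::real))) \<in> borel_measurable borel"
  proof (cases "z = x")
    case True
    have Sm: "(\<lambda>\<tau>. (\<Sum>w\<in>{w. adj x w}. indicator (EE {x,w}) \<tau> :: real)) \<in> borel_measurable borel"
      by (rule borel_measurable_sum) (auto intro: borel_measurable_indicator EE_meas)
    have "(\<lambda>\<tau>. indicator {0..T} \<tau> * (1 - (\<Sum>w\<in>{w. adj x w}. indicator (EE {x,w}) \<tau>) / real d) :: real) \<in> borel_measurable borel"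
      by (intro borel_measurable_times borel_measurable_diff borel_measurable_divide Sm borel_measurable_const borel_measurable_indicator) simp
    then show ?thesis using True by simp
  next
    case False
    show ?thesis
    proof (cases "adj x z")
      case True
      have "indicator (EE {x,z}) \<in> borel_measurable borel"
        by (rule borel_measurable_indicator) (rule EE_meas[OF True])
      then have "(\<lambda>\<tau>. indicator {0..T} \<tau> * (indicator (EE {x,z}) \<tau> / real d) :: real) \<in> borel_measurable borel"
        by (intro borel_measurable_times borel_measurable_divide borel_measurable_const borel_measurable_indicator) (simp_all add: EE_meas[OF True])
      then show ?thesis using False True by simp
    qed (use False in simp)
  qed
  show ?thesis by (subst eq) (rule m)
qed

end

context wsetup begin

lemma A_meas:
  assumes T: "T \<le> T0"
  shows "(\<lambda>t. indicator {0..T} t * A T n t x y) \<in> borel_measurable borel"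
proof (induction n arbitrary: x y)
  case 0
  then show ?case by simp
next
  case (Suc n)
  define h where "h \<tau> = indicator {0..T} \<tau> * (\<Sum>z\<in>NB x. K \<tau> x z * A T n \<tau> z y)" for \<tau>
  have heq: "h \<tau> = (\<Sum>z\<in>NB x. (indicator {0..T} \<tau> * K \<tau> x z) * (indicator {0..T} \<tau> * A T n \<tau> z y))" for \<tau>
    unfolding h_def sum_distrib_left by (rule sum.cong) (auto simp: indicator_def)
  have hm: "h \<in> borel_measurable borel"
    unfolding heq[abs_def]
    by (intro borel_measurable_sum borel_measurable_times K_meas[OF T] Suc)
  have hm2: "(\<lambda>(t, \<tau>). indicator {t..T} \<tau> * h \<tau>) \<in> borel_measurable (borel \<Otimes>\<^sub>M lborel)"
  proof -
    have h1: "(\<lambda>p. h (snd p)) \<in> borel_measurable (borel \<Otimes>\<^sub>M lborel)"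
      using hm by measurable
    moreover have h2: "(\<lambda>p::real\<times>real. indicator {fst p..T} (snd p) :: real) \<in> borel_measurable (borel \<Otimes>\<^sub>M lborel)"
    proof -
      have "(\<lambda>p::real\<times>real. indicator {fst p..T} (snd p) :: real) = (\<lambda>p. if fst p \<le> snd p \<and> snd p \<le> T then 1 else 0)"
        by (auto simp: indicator_def fun_eq_iff)
      also have "\<dots> \<in> borel_measurable (borel \<Otimes>\<^sub>M lborel)" by measurable
      finally show ?thesis .
    qed
    ultimately show ?thesis using borel_measurable_times[OF h2 h1] by (simp add: case_prod_beta')
  qed
  have Phim: "(\<lambda>t. \<integral>\<tau>. indicator {t..T} \<tau> * h \<tau> \<partial>lborel) \<in> borel_measurable borel"
    using lborel.borel_measurable_lebesgue_integral[OF hm2] by simp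
  have "indicator {0..T} t * A T (Suc n) t x y = indicator {0..T} t * (\<integral>\<tau>. indicator {t..T} \<tau> * h \<tau> \<partial>lborel)" for t
  proof (cases "t \<in> {0..T}")
    case True
    have "A T (Suc n) t x y = (\<integral>\<tau>. indicator {t..T} \<tau> * h \<tau> \<partial>lborel)"
      unfolding walk_A.simps set_lebesgue_integral_def h_def
      by (rule Bochner_Integration.integral_cong) (use True in \<open>auto simp: indicator_def\<close>)
    then show ?thesis by simp
  qed simp
  then have "(\<lambda>t. indicator {0..T} t * A T (Suc n) t x y) = (\<lambda>t. indicator {0..T} t * (\<integral>\<tau>. indicator {t..T} \<tau> * h \<tau> \<partial>lborel))"
    by (rule ext)
  moreover have "(\<lambda>t. indicator {0..T} t * (\<integral>\<tau>. indicator {t..T} \<tau> * h \<tau> \<partial>lborel)) \<in> borel_measurable borel"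
    by (intro borel_measurable_times Phim) simp
  ultimately show ?case by simp
qed

end


lemma set_integrable_sum':
  fixes f :: "'i \<Rightarrow> real \<Rightarrow> real"
  assumes "finite I" "\<And>i. i \<in> I \<Longrightarrow> set_integrable M S (f i)"
  shows "set_integrable M S (\<lambda>x. \<Sum>i\<in>I. f i x)"
  using assms unfolding set_integrable_def scaleR_sum_right by (intro Bochner_Integration.integrable_sum) auto

lemma set_integral_sum':
  fixes f :: "'i \<Rightarrow> real \<Rightarrow> real"
  assumes "finite I" "\<And>i. i \<in> I \<Longrightarrow> set_integrable M S (f i)"
  shows "(LINT x:S|M. (\<Sum>i\<in>I. f i x)) = (\<Sum>i\<in>I. LINT x:S|M. f i x)"
  using assms unfolding set_integrable_def set_lebesgue_integral_def scaleR_sum_right by (intro Bochner_Integration.integral_sum) auto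

lemma sic:
  fixes f g :: "real \<Rightarrow> real"
  assumes "\<And>x. x \<in> A \<Longrightarrow> f x = g x"
  shows "(LINT x:A|M. f x) = (LINT x:A|M. g x)"
  unfolding set_lebesgue_integral_def
  by (rule Bochner_Integration.integral_cong) (auto simp: indicator_def assms)

lemma div_fact_le: "0 \<le> x \<Longrightarrow> x / fact n \<le> (x::real)"
  by (metis div_by_1 divide_mono dual_order.eq_iff fact_ge_1 less_numeral_extra(1))

lemma int_poly:
  fixes s T :: real
  assumes st: "s \<le> T"
  shows "(LINT \<tau>:{s..T}|lborel. (T - \<tau>)^n / fact n) = (T - s)^(Suc n) / fact (Suc n)"
proof -
  define F where "F \<tau> = - ((T - \<tau>)^(Suc n)) / fact (Suc n)" for \<tau> :: real
  have D0: "(F has_real_derivative ((T - \<tau>)^n / fact n)) (at \<tau> within {s..T})" for \<tau>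
  proof -
    have d1: "((\<lambda>\<tau>. T - \<tau>) has_real_derivative -1) (at \<tau> within {s..T})"
      by (auto intro!: derivative_eq_intros)
    have d3: "(F has_real_derivative (- ((1 + real n) * (-1 * (T - \<tau>)^n)) / fact (Suc n))) (at \<tau> within {s..T})"
      unfolding F_def[abs_def] by (rule DERIV_cdivide[OF DERIV_minus[OF DERIV_power_Suc[OF d1]]])
    moreover have "(- ((1 + real n) * (-1 * (T - \<tau>)^n)) / fact (Suc n)) = (T - \<tau>)^n / fact n"
      by (simp add: fact_Suc field_simps del: of_nat_Suc) (simp add: algebra_simps)
    ultimately show ?thesis by simp
  qed
  have D: "(F has_vector_derivative ((T - \<tau>)^n / fact n)) (at \<tau> within {s..T})" for \<tau>
    using D0[of \<tau>] by (simp add: has_real_derivative_iff_has_vector_derivative)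
  have "(LINT \<tau>:{s..T}|lborel. (T - \<tau>)^n / fact n) = F T - F s"
    unfolding set_lebesgue_integral_def
    by (rule integral_FTC_atLeastAtMost[OF st D]) (intro continuous_intros; simp)
  then show ?thesis by (simp add: F_def)
qed

context wsetup begin

lemma integ:
  assumes T: "T \<le> T0" and s: "0 \<le> s" and fin: "finite B"
    and bnd: "\<And>\<tau> z. 0 \<le> \<tau> \<Longrightarrow> \<tau> \<le> T \<Longrightarrow> \<bar>A T n \<tau> z y\<bar> \<le> C"
  shows "set_integrable lborel {s..T} (\<lambda>\<tau>. \<Sum>z\<in>B. K \<tau> x z * A T n \<tau> z y)"
  unfolding set_integrable_def
proof (rule integrableI_bounded_set[where A="{s..T}" and B="real (card B) * \<bar>C\<bar>"])
  show "{s..T} \<in> sets lborel" by simp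
  show "emeasure lborel {s..T} < \<infinity>" by (cases "s \<le> T") auto
  have eq: "indicator {s..T} \<tau> *\<^sub>R (\<Sum>z\<in>B. K \<tau> x z * A T n \<tau> z y) =
     indicator {s..T} \<tau> * (\<Sum>z\<in>B. (indicator {0..T} \<tau> * K \<tau> x z) * (indicator {0..T} \<tau> * A T n \<tau> z y))" for \<tau>
    using s by (auto simp: indicator_def)
  have m: "(\<lambda>\<tau>. \<Sum>z\<in>B. (indicator {0..T} \<tau> * K \<tau> x z) * (indicator {0..T} \<tau> * A T n \<tau> z y)) \<in> borel_measurable borel"
    by (rule borel_measurable_sum, rule borel_measurable_times[OF K_meas[OF T] A_meas[OF T]])
  have m2: "(\<lambda>\<tau>. indicator {s..T} \<tau> * (\<Sum>z\<in>B. (indicator {0..T} \<tau> * K \<tau> x z) * (indicator {0..T} \<tau> * A T n \<tau> z y))) \<in> borel_measurable borel"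
    by (rule borel_measurable_times[OF _ m]) simp
  show "(\<lambda>\<tau>. indicator {s..T} \<tau> *\<^sub>R (\<Sum>z\<in>B. K \<tau> x z * A T n \<tau> z y)) \<in> borel_measurable lborel"
    unfolding eq using m2 by simp
  show "AE \<tau> in lborel. \<tau> \<in> {s..T} \<longrightarrow> norm (indicator {s..T} \<tau> *\<^sub>R (\<Sum>z\<in>B. K \<tau> x z * A T n \<tau> z y)) \<le> real (card B) * \<bar>C\<bar>"
  proof (rule AE_I2, rule impI)
    fix \<tau> assume t: "\<tau> \<in> {s..T}"
    have "norm (indicator {s..T} \<tau> *\<^sub>R (\<Sum>z\<in>B. K \<tau> x z * A T n \<tau> z y)) = \<bar>\<Sum>z\<in>B. K \<tau> x z * A T n \<tau> z y\<bar>"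
      using t by simp
    also have "\<dots> \<le> (\<Sum>z\<in>B. \<bar>K \<tau> x z * A T n \<tau> z y\<bar>)" by (rule sum_abs)
    also have "\<dots> \<le> (\<Sum>z\<in>B. \<bar>C\<bar>)"
    proof (rule sum_mono)
      fix z assume "z \<in> B"
      have "\<bar>K \<tau> x z * A T n \<tau> z y\<bar> = K \<tau> x z * \<bar>A T n \<tau> z y\<bar>"
        using K_nonneg by (simp add: abs_mult)
      also have "\<dots> \<le> 1 * \<bar>C\<bar>"
        using bnd[of \<tau> z] t s K_nonneg[of \<tau> x z] K_le1[of \<tau> x z]
        by (intro mult_mono) auto
      finally show "\<bar>K \<tau> x z * A T n \<tau> z y\<bar> \<le> \<bar>C\<bar>" by simp
    qed
    finally show "norm (indicator {s..T} \<tau> *\<^sub>R (\<Sum>z\<in>B. K \<tau> x z * A T n \<tau> z y)) \<le> real (card B) * \<bar>C\<bar>"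
      by simp
  qed
  show "AE \<tau> in lborel. \<tau> \<notin> {s..T} \<longrightarrow> indicator {s..T} \<tau> *\<^sub>R (\<Sum>z\<in>B. K \<tau> x z * A T n \<tau> z y) = 0"
    by simp
qed

lemma mass:
  assumes T: "T \<le> T0"
  shows "0 \<le> s \<Longrightarrow> s \<le> T \<Longrightarrow> finite Y \<Longrightarrow> reach adj n x \<subseteq> Y \<Longrightarrow>
    (\<Sum>y\<in>Y. A T n s x y) = (T - s)^n / fact n"
proof (induction n arbitrary: s x Y)
  case 0
  then show ?case by simp
next
  case (Suc n)
  have ptw: "\<bar>A T n \<tau> z y\<bar> \<le> T^n" if "0 \<le> \<tau>" "\<tau> \<le> T" for \<tau> z y
  proof (cases "y \<in> reach adj n z")
    case True
    have "A T n \<tau> z y \<le> (\<Sum>y'\<in>reach adj n z. A T n \<tau> z y')"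
      by (rule member_le_sum[OF True]) (auto simp: A_nonneg reach_fin)
    also have "\<dots> = (T - \<tau>)^n / fact n" using Suc.IH[of \<tau> "reach adj n z" z] that reach_fin by auto
    also have "\<dots> \<le> (T - \<tau>)^n" using that by (intro div_fact_le) simp 
    also have "\<dots> \<le> T^n" using that by (intro power_mono) auto
    finally show ?thesis using A_nonneg[of T n \<tau> z y] by simp
  qed (use that in \<open>simp add: A_supp\<close>)
  have I: "set_integrable lborel {s..T} (\<lambda>\<tau>. \<Sum>z\<in>NB x. K \<tau> x z * A T n \<tau> z y)" for y
    by (rule integ[OF T Suc.prems(1) finNB ptw])
  have "(\<Sum>y\<in>Y. A T (Suc n) s x y) = (\<Sum>y\<in>Y. LINT \<tau>:{s..T}|lborel. (\<Sum>z\<in>NB x. K \<tau> x z * A T n \<tau> z y))"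
    by simp
  also have "\<dots> = (LINT \<tau>:{s..T}|lborel. (\<Sum>y\<in>Y. \<Sum>z\<in>NB x. K \<tau> x z * A T n \<tau> z y))"
    by (rule set_integral_sum'[symmetric]) (use Suc.prems(3) I in auto)
  also have "\<dots> = (LINT \<tau>:{s..T}|lborel. (T - \<tau>)^n / fact n)"
  proof (rule sic)
    fix \<tau> assume t: "\<tau> \<in> {s..T}"
    have "(\<Sum>y\<in>Y. \<Sum>z\<in>NB x. K \<tau> x z * A T n \<tau> z y) = (\<Sum>z\<in>NB x. K \<tau> x z * (\<Sum>y\<in>Y. A T n \<tau> z y))"
      by (subst sum.swap) (simp add: sum_distrib_left)
    also have "\<dots> = (\<Sum>z\<in>NB x. K \<tau> x z * ((T - \<tau>)^n / fact n))"
    proof (rule sum.cong[OF refl])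
      fix z assume z: "z \<in> NB x"
      have "reach adj n z \<subseteq> Y" using reach_sub[OF z, of n] Suc.prems(4) by blast
      then show "K \<tau> x z * (\<Sum>y\<in>Y. A T n \<tau> z y) = K \<tau> x z * ((T - \<tau>)^n / fact n)"
        using Suc.IH[of \<tau> Y z] t Suc.prems by auto
    qed
    also have "\<dots> = (T - \<tau>)^n / fact n" by (subst sum_distrib_right[symmetric]) (simp add: K_sum)
    finally show "(\<Sum>y\<in>Y. \<Sum>z\<in>NB x. K \<tau> x z * A T n \<tau> z y) = (T - \<tau>)^n / fact n" .
  qed
  also have "\<dots> = (T - s)^(Suc n) / fact (Suc n)" by (rule int_poly) (use Suc.prems in simp)
  finally show ?case .
qed

lemma A_bound:
  assumes T: "T \<le> T0" and "0 \<le> s" "s \<le> T"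
  shows "A T n s x y \<le> (T - s)^n / fact n"
proof (cases "y \<in> reach adj n x")
  case True
  have "A T n s x y \<le> (\<Sum>y'\<in>reach adj n x. A T n s x y')"
    by (rule member_le_sum[OF True]) (auto simp: A_nonneg reach_fin)
  also have "\<dots> = (T - s)^n / fact n" using mass[OF T] assms reach_fin by auto
  finally show ?thesis .
next
  case False
  then show ?thesis using assms by (simp add: A_supp)
qed

lemma sum_bound:
  assumes T: "T \<le> T0" and "0 \<le> s" "s \<le> T" "finite Y"
  shows "(\<Sum>y\<in>Y. A T n s x y) \<le> (T - s)^n / fact n"
proof -
  have "(\<Sum>y\<in>Y. A T n s x y) \<le> (\<Sum>y\<in>Y \<union> reach adj n x. A T n s x y)"
    by (rule sum_mono2) (auto simp: assms reach_fin A_nonneg)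
  also have "\<dots> = (T - s)^n / fact n" using mass[OF T] assms reach_fin by auto
  finally show ?thesis .
qed

lemma A_abs_bound:
  assumes T: "T \<le> T0" and "0 \<le> s" "s \<le> T"
  shows "\<bar>A T n s x y\<bar> \<le> T^n"
proof -
  have "A T n s x y \<le> (T - s)^n / fact n" by (rule A_bound[OF assms])
  also have "\<dots> \<le> (T - s)^n" using assms by (intro div_fact_le) simp
  also have "\<dots> \<le> T^n" using assms by (intro power_mono) auto
  finally show ?thesis using A_nonneg[of T n s x y] by simp
qed

lemma integ2:
  assumes T: "T \<le> T0" and s: "0 \<le> s" and fin: "finite B"
  shows "set_integrable lborel {s..T} (\<lambda>\<tau>. \<Sum>z\<in>B. K \<tau> x z * A T n \<tau> z y)"
  by (rule integ[OF T s fin A_abs_bound[OF T]])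

end


lemma split_int:
  fixes f :: "real \<Rightarrow> real"
  assumes "s \<le> u" "u \<le> T" "set_integrable lborel {s..T} f"
  shows "(LINT x:{s..T}|lborel. f x) = (LINT x:{s..u}|lborel. f x) + (LINT x:{u..T}|lborel. f x)"
proof -
  have "{s..T} = {s..u} \<union> {u..T}" using assms by auto
  moreover have "(LINT x:{s..u} \<union> {u..T}|lborel. f x) = (LINT x:{s..u}|lborel. f x) + (LINT x:{u..T}|lborel. f x)"
  proof (rule set_integral_Un_AE)
    show "AE x in lborel. \<not> (x \<in> {s..u} \<and> x \<in> {u..T})"
      using AE_lborel_singleton[of u] by eventually_elim auto
    show "set_integrable lborel {s..u} f" by (rule set_integrable_subset[OF assms(3)]) (use assms in auto)
    show "set_integrable lborel {u..T} f" by (rule set_integrable_subset[OF assms(3)]) (use assms in auto)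
  qed auto
  ultimately show ?thesis by simp
qed

context wsetup begin

lemma colsum:
  assumes T: "T \<le> T0"
  shows "0 \<le> s \<Longrightarrow> s \<le> T \<Longrightarrow> finite X \<Longrightarrow> (\<Sum>x\<in>X. A T n s x w) \<le> (T - s)^n / fact n"
proof (induction n arbitrary: s X)
  case 0
  have "(\<Sum>x\<in>X. A T 0 s x w) = (if w \<in> X then 1 else 0)"
    using 0 by (simp add: sum.delta)
  then show ?case by simp
next
  case (Suc n)
  define B where "B = (\<Union>x\<in>X. NB x)"
  have finB: "finite B" using Suc.prems(3) finNB by (auto simp: B_def)
  have I: "set_integrable lborel {s..T} (\<lambda>\<tau>. \<Sum>z\<in>NB x. K \<tau> x z * A T n \<tau> z w)" for x
    by (rule integ2[OF T Suc.prems(1) finNB])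
  have "(\<Sum>x\<in>X. A T (Suc n) s x w) = (LINT \<tau>:{s..T}|lborel. (\<Sum>x\<in>X. \<Sum>z\<in>NB x. K \<tau> x z * A T n \<tau> z w))"
    by (simp add: set_integral_sum'[OF Suc.prems(3) I])
  also have "\<dots> \<le> (LINT \<tau>:{s..T}|lborel. (T - \<tau>)^n / fact n)"
  proof (rule set_integral_mono)
    show "set_integrable lborel {s..T} (\<lambda>\<tau>. \<Sum>x\<in>X. \<Sum>z\<in>NB x. K \<tau> x z * A T n \<tau> z w)"
      by (rule set_integrable_sum'[OF Suc.prems(3) I])
    show "set_integrable lborel {s..T} (\<lambda>\<tau>. (T - \<tau>)^n / fact n)"
      by (rule borel_integrable_atLeastAtMost') (intro continuous_intros; simp)
    fix \<tau> assume t: "\<tau> \<in> {s..T}"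
    have "(\<Sum>x\<in>X. \<Sum>z\<in>NB x. K \<tau> x z * A T n \<tau> z w) = (\<Sum>x\<in>X. \<Sum>z\<in>B. K \<tau> x z * A T n \<tau> z w)"
      by (rule sum.cong[OF refl], rule K_sum_big[symmetric, OF finB]) (auto simp: B_def)
    also have "\<dots> = (\<Sum>z\<in>B. (\<Sum>x\<in>X. K \<tau> x z) * A T n \<tau> z w)"
      by (subst sum.swap) (simp add: sum_distrib_right)
    also have "\<dots> \<le> (\<Sum>z\<in>B. A T n \<tau> z w)"
    proof (rule sum_mono)
      fix z assume "z \<in> B"
      show "(\<Sum>x\<in>X. K \<tau> x z) * A T n \<tau> z w \<le> A T n \<tau> z w"
        using K_colsum_le[OF Suc.prems(3), of \<tau> z] A_nonneg[of T n \<tau> z w]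
        by (intro mult_left_le_one_le) (auto intro: sum_nonneg K_nonneg)
    qed
    also have "\<dots> \<le> (T - \<tau>)^n / fact n" using Suc.IH[of \<tau> B] t finB Suc.prems by auto
    finally show "(\<Sum>x\<in>X. \<Sum>z\<in>NB x. K \<tau> x z * A T n \<tau> z w) \<le> (T - \<tau>)^n / fact n" .
  qed
  also have "\<dots> = (T - s)^(Suc n) / fact (Suc n)" by (rule int_poly) (use Suc.prems in simp)
  finally show ?case .
qed

lemma MK:
  assumes T: "T \<le> T0" and u: "u \<le> T"
  shows "0 \<le> s \<Longrightarrow> s \<le> u \<Longrightarrow> finite W \<Longrightarrow> (\<forall>j\<le>n. reach adj j x \<subseteq> W) \<Longrightarrow>
    A T n s x y = (\<Sum>j\<le>n. \<Sum>w\<in>W. A u j s x w * A T (n - j) u w y)"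
proof (induction n arbitrary: s x y)
  case 0
  then have xW: "x \<in> W" by auto
  have "(\<Sum>w\<in>W. A u 0 s x w * A T 0 u w y) = (\<Sum>w\<in>W. if w = x then (if x = y then 1 else 0) else 0)"
    by (rule sum.cong) auto
  also have "\<dots> = (if x = y then 1 else 0)" using 0 xW by simp
  finally show ?case by simp
next
  case (Suc n)
  have uT0: "u \<le> T0" using u T by simp
  define g where "g \<tau> = (\<Sum>z\<in>NB x. K \<tau> x z * A T n \<tau> z y)" for \<tau>
  have xW: "x \<in> W" using Suc.prems(4) by auto
  have "A T (Suc n) s x y = (LINT \<tau>:{s..T}|lborel. g \<tau>)" by (simp add: g_def)
  also have "\<dots> = (LINT \<tau>:{s..u}|lborel. g \<tau>) + (LINT \<tau>:{u..T}|lborel. g \<tau>)"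
    by (rule split_int) (use Suc.prems u in \<open>auto simp: g_def intro: integ2[OF T _ finNB]\<close>)
  also have "(LINT \<tau>:{u..T}|lborel. g \<tau>) = A T (Suc n) u x y" by (simp add: g_def)
  also have "(LINT \<tau>:{s..u}|lborel. g \<tau>) =
     (LINT \<tau>:{s..u}|lborel. (\<Sum>j\<le>n. \<Sum>w\<in>W. A T (n - j) u w y * (\<Sum>z\<in>NB x. K \<tau> x z * A u j \<tau> z w)))"
  proof (rule sic)
    fix \<tau> assume t: "\<tau> \<in> {s..u}"
    have "g \<tau> = (\<Sum>z\<in>NB x. K \<tau> x z * (\<Sum>j\<le>n. \<Sum>w\<in>W. A u j \<tau> z w * A T (n - j) u w y))"
      unfolding g_def
    proof (rule sum.cong[OF refl])
      fix z assume z: "z \<in> NB x"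
      have "\<forall>j\<le>n. reach adj j z \<subseteq> W"
        using reach_sub[OF z] Suc.prems(4) by (meson Suc_le_mono order_trans)
      then show "K \<tau> x z * A T n \<tau> z y = K \<tau> x z * (\<Sum>j\<le>n. \<Sum>w\<in>W. A u j \<tau> z w * A T (n - j) u w y)"
        using Suc.IH[of \<tau> z y] t Suc.prems by auto
    qed
    also have "\<dots> = (\<Sum>z\<in>NB x. \<Sum>j\<le>n. \<Sum>w\<in>W. A T (n - j) u w y * (K \<tau> x z * A u j \<tau> z w))"
      by (simp add: sum_distrib_left mult_ac)
    also have "\<dots> = (\<Sum>j\<le>n. \<Sum>z\<in>NB x. \<Sum>w\<in>W. A T (n - j) u w y * (K \<tau> x z * A u j \<tau> z w))"
      by (rule sum.swap)
    also have "\<dots> = (\<Sum>j\<le>n. \<Sum>w\<in>W. \<Sum>z\<in>NB x. A T (n - j) u w y * (K \<tau> x z * A u j \<tau> z w))"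
      by (rule sum.cong[OF refl], rule sum.swap)
    also have "\<dots> = (\<Sum>j\<le>n. \<Sum>w\<in>W. A T (n - j) u w y * (\<Sum>z\<in>NB x. K \<tau> x z * A u j \<tau> z w))"
      by (simp add: sum_distrib_left)
    finally show "g \<tau> = (\<Sum>j\<le>n. \<Sum>w\<in>W. A T (n - j) u w y * (\<Sum>z\<in>NB x. K \<tau> x z * A u j \<tau> z w))" .
  qed
  also have "\<dots> = (\<Sum>j\<le>n. \<Sum>w\<in>W. A T (n - j) u w y * (LINT \<tau>:{s..u}|lborel. (\<Sum>z\<in>NB x. K \<tau> x z * A u j \<tau> z w)))"
  proof -
    have I: "set_integrable lborel {s..u} (\<lambda>\<tau>. \<Sum>z\<in>NB x. K \<tau> x z * A u j \<tau> z w)" for j w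
      by (rule integ2[OF uT0 Suc.prems(1) finNB])
    show ?thesis
      apply (subst set_integral_sum')
        apply simp
       apply (rule set_integrable_sum'[OF Suc.prems(3)])
       apply (use I in simp)
      apply (rule sum.cong[OF refl])
      apply (subst set_integral_sum'[OF Suc.prems(3)])
       apply (use I in simp)
      apply (simp add: I)
      done
  qed
  also have "\<dots> = (\<Sum>j\<le>n. \<Sum>w\<in>W. A u (Suc j) s x w * A T (n - j) u w y)"
    by (simp add: mult.commute)
  also have "A T (Suc n) u x y = (\<Sum>w\<in>W. A u 0 s x w * A T (Suc n - 0) u w y)"
  proof -
    have "(\<Sum>w\<in>W. A u 0 s x w * A T (Suc n - 0) u w y) = (\<Sum>w\<in>W. if w = x then A T (Suc n) u x y else 0)"
      by (rule sum.cong) auto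
    also have "\<dots> = A T (Suc n) u x y" using Suc.prems(3) xW by simp
    finally show ?thesis by simp
  qed
  finally have "A T (Suc n) s x y = (\<Sum>j\<le>n. \<Sum>w\<in>W. A u (Suc j) s x w * A T (Suc n - Suc j) u w y) +
       (\<Sum>w\<in>W. A u 0 s x w * A T (Suc n - 0) u w y)" by simp
  also have "\<dots> = (\<Sum>j\<le>Suc n. \<Sum>w\<in>W. A u j s x w * A T (Suc n - j) u w y)"
    by (subst sum.atMost_Suc_shift) simp
  finally show ?case .
qed

end


lemma exp_sums: "(\<lambda>n. (x::real)^n / fact n) sums exp x"
  using exp_converges[of x] by (simp add: divide_inverse mult.commute)

lemma summable_expo: "summable (\<lambda>n. (x::real)^n / fact n)"
  using exp_sums by (rule sums_summable)

lemma suminf_expo: "(\<Sum>n. (x::real)^n / fact n) = exp x"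
  using exp_sums by (rule sums_unique[symmetric])

context wsetup begin

lemma A_summable:
  assumes T: "T \<le> T0" and "0 \<le> s" "s \<le> T"
  shows "summable (\<lambda>n. A T n s x y)"
proof (rule summable_comparison_test[OF _ summable_expo[of "T - s"]])
  show "\<exists>N. \<forall>n\<ge>N. norm (A T n s x y) \<le> (T - s)^n / fact n"
    using A_bound[OF assms] A_nonneg by auto
qed

lemma trans_finite_le:
  assumes T0: "0 \<le> T0" and F: "finite F"
  shows "(\<Sum>y\<in>F. trans_prob adj eta T0 x y) \<le> 1"
proof -
  have "(\<Sum>y\<in>F. trans_prob adj eta T0 x y) = exp (- T0) * (\<Sum>y\<in>F. \<Sum>n. A T0 n 0 x y)"
    by (simp add: trans_prob_def sum_distrib_left)
  also have "(\<Sum>y\<in>F. \<Sum>n. A T0 n 0 x y) = (\<Sum>n. \<Sum>y\<in>F. A T0 n 0 x y)"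
    by (rule suminf_sum[symmetric]) (rule A_summable, use T0 in auto)
  also have "\<dots> \<le> (\<Sum>n. T0^n / fact n)"
  proof (rule suminf_le)
    show "(\<Sum>y\<in>F. A T0 n 0 x y) \<le> T0^n / fact n" for n
      using sum_bound[of T0 0 F n x] T0 F by simp
    show "summable (\<lambda>n. \<Sum>y\<in>F. A T0 n 0 x y)"
      by (rule summable_sum) (rule A_summable, use T0 in auto)
  qed (rule summable_expo)
  also have "\<dots> = exp T0" by (rule suminf_expo)
  finally show ?thesis by (simp add: exp_minus field_simps)
qed

lemma trans_nonneg: "0 \<le> T0 \<Longrightarrow> 0 \<le> trans_prob adj eta T0 x y"
  unfolding trans_prob_def by (intro mult_nonneg_nonneg suminf_nonneg A_summable) (auto simp: A_nonneg)

lemma row_escape: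
  assumes T0: "0 \<le> T0" and S: "finite S"
  shows "infsum (\<lambda>y. trans_prob adj eta T0 x y) (- S) \<ge> 1 - (\<Sum>y\<in>S. trans_prob adj eta T0 x y)"
proof -
  let ?f = "\<lambda>y. trans_prob adj eta T0 x y"
  have summ: "?f summable_on (- S)"
  proof (rule nonneg_bdd_above_summable_on)
    show "0 \<le> ?f y" for y by (rule trans_nonneg[OF T0])
    show "bdd_above (sum ?f ` {F. F \<subseteq> - S \<and> finite F})"
      by (rule bdd_aboveI[where M=1]) (auto intro: trans_finite_le[OF T0])
  qed
  define F where "F N = (\<Union>n<N. reach adj n x) - S" for N
  have finF: "finite (F N)" for N by (auto simp: F_def reach_fin)
  have low: "exp (- T0) * (\<Sum>n<N. T0^n / fact n) - (\<Sum>y\<in>S. ?f y) \<le> infsum ?f (- S)" for N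
  proof -
    have "(\<Sum>y\<in>F N. ?f y) \<le> infsum ?f (- S)"
    proof -
      have "infsum ?f (F N) \<le> infsum ?f (- S)"
        by (rule infsum_mono_neutral[OF summable_on_finite[OF finF] summ]) (auto simp: F_def trans_nonneg[OF T0])
      then show ?thesis using finF by simp
    qed
    moreover have "exp (- T0) * (\<Sum>n<N. T0^n / fact n) - (\<Sum>y\<in>S. ?f y) \<le> (\<Sum>y\<in>F N. ?f y)"
    proof -
      have sm: "summable (\<lambda>n. A T0 n 0 x y)" for y by (rule A_summable) (use T0 in auto)
      have e1: "(\<Sum>y\<in>F N. ?f y) = exp (- T0) * (\<Sum>n. \<Sum>y\<in>F N. A T0 n 0 x y)"
        by (simp add: trans_prob_def sum_distrib_left[symmetric] suminf_sum[OF sm])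
      have e2: "(\<Sum>y\<in>S. ?f y) = exp (- T0) * (\<Sum>n. \<Sum>y\<in>S. A T0 n 0 x y)"
        by (simp add: trans_prob_def sum_distrib_left[symmetric] suminf_sum[OF sm])
      have "(\<Sum>n<N. T0^n / fact n) - (\<Sum>n. \<Sum>y\<in>S. A T0 n 0 x y)
          \<le> (\<Sum>n<N. T0^n / fact n) - (\<Sum>n<N. \<Sum>y\<in>S. A T0 n 0 x y)"
      proof -
        have "(\<Sum>n<N. \<Sum>y\<in>S. A T0 n 0 x y) \<le> (\<Sum>n. \<Sum>y\<in>S. A T0 n 0 x y)"
          by (rule sum_le_suminf) (auto intro!: summable_sum sm sum_nonneg A_nonneg)
        then show ?thesis by simp
      qed
      also have "\<dots> = (\<Sum>n<N. \<Sum>y\<in>F N. A T0 n 0 x y)"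
      proof -
        have "(\<Sum>y\<in>F N. A T0 n 0 x y) = T0^n / fact n - (\<Sum>y\<in>S. A T0 n 0 x y)" if n: "n < N" for n
        proof -
          have "(\<Sum>y\<in>F N \<union> S. A T0 n 0 x y) = T0^n / fact n"
            using mass[of T0 0 "F N \<union> S" n x] T0 finF S n by (auto simp: F_def)
          moreover have "(\<Sum>y\<in>F N \<union> S. A T0 n 0 x y) = (\<Sum>y\<in>F N. A T0 n 0 x y) + (\<Sum>y\<in>S. A T0 n 0 x y)"
            by (rule sum.union_disjoint) (auto simp: finF S F_def reach_fin)
          ultimately show ?thesis by simp
        qed
        then show ?thesis by (simp add: sum_subtractf)
      qed
      also have "\<dots> \<le> (\<Sum>n. \<Sum>y\<in>F N. A T0 n 0 x y)"
        by (rule sum_le_suminf) (auto intro!: summable_sum sm sum_nonneg A_nonneg)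
      finally have "(\<Sum>n<N. T0^n / fact n) - (\<Sum>n. \<Sum>y\<in>S. A T0 n 0 x y) \<le> (\<Sum>n. \<Sum>y\<in>F N. A T0 n 0 x y)" .
      then have "exp (- T0) * ((\<Sum>n<N. T0^n / fact n) - (\<Sum>n. \<Sum>y\<in>S. A T0 n 0 x y)) \<le> exp (- T0) * (\<Sum>n. \<Sum>y\<in>F N. A T0 n 0 x y)"
        by (rule mult_left_mono) simp
      then show ?thesis using e1 e2 by (simp add: right_diff_distrib)
    qed
    ultimately show ?thesis by linarith
  qed
  have lim: "(\<lambda>N. exp (- T0) * (\<Sum>n<N. T0^n / fact n) - (\<Sum>y\<in>S. ?f y)) \<longlonglongrightarrow> exp (- T0) * exp T0 - (\<Sum>y\<in>S. ?f y)"
    using exp_sums[of T0] unfolding sums_def by (intro tendsto_intros)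
  have "exp (- T0) * exp T0 - (\<Sum>y\<in>S. ?f y) \<le> infsum ?f (- S)"
    by (rule LIMSEQ_le_const2[OF lim]) (use low in auto)
  then show ?thesis by (simp add: exp_minus)
qed

end


lemma tri_le:
  fixes g :: "nat \<Rightarrow> nat \<Rightarrow> real"
  assumes "\<And>j m. 0 \<le> g j m"
  shows "(\<Sum>n<N. \<Sum>j\<le>n. g j (n - j)) \<le> (\<Sum>j<N. \<Sum>m<N. g j m)"
proof -
  have "(\<Sum>n<N. \<Sum>j\<le>n. g j (n - j)) = (\<Sum>(j,m)\<in>{(j,m). j + m < N}. g j m)"
    by (rule sum.triangle_reindex[symmetric])
  also have "\<dots> \<le> (\<Sum>(j,m)\<in>{..<N} \<times> {..<N}. g j m)"
    by (rule sum_mono2) (auto simp: assms)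
  also have "\<dots> = (\<Sum>j<N. \<Sum>m<N. g j m)"
    by (rule sum.cartesian_product[symmetric])
  finally show ?thesis .
qed

context wsetup begin

definition Oset where "Oset S u w = {y. adj w y \<and> y \<notin> S \<and> (\<forall>t\<in>{u..T0}. eta t {w, y})}"
definition kk where "kk S u w = real (card (Oset S u w)) / real d"
definition psi where "psi S u w = (if w \<in> S then kk S u w else 1)"

lemma Oset_sub: "Oset S u w \<subseteq> {y. adj w y}" by (auto simp: Oset_def)
lemma Oset_fin: "finite (Oset S u w)" by (rule finite_subset[OF Oset_sub]) simp

lemma kk_le1: "kk S u w \<le> 1"
proof -
  have "card (Oset S u w) \<le> card {y. adj w y}" by (rule card_mono[OF _ Oset_sub]) simp
  then show ?thesis using cardN[of w] dpos by (simp add: kk_def divide_le_eq)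
qed

lemma kk_nonneg: "0 \<le> kk S u w" by (simp add: kk_def)

lemma A1_open:
  assumes u: "0 \<le> u" and Tu: "T0 = u + 1" and y: "y \<in> Oset S u w"
  shows "A T0 1 u w y = 1 / real d"
proof -
  have ay: "adj w y" and yw: "y \<noteq> w" and op: "\<forall>t\<in>{u..T0}. eta t {w, y}"
    using y irr by (auto simp: Oset_def)
  have "A T0 1 u w y = (LINT \<tau>:{u..T0}|lborel. (\<Sum>z\<in>NB w. K \<tau> w z * A T0 0 \<tau> z y))"
    by (simp add: One_nat_def)
  also have "\<dots> = (LINT \<tau>:{u..T0}|lborel. 1 / real d)"
  proof (rule sic)
    fix \<tau> assume t: "\<tau> \<in> {u..T0}"
    have "(\<Sum>z\<in>NB w. K \<tau> w z * A T0 0 \<tau> z y) = (\<Sum>z\<in>NB w. if z = y then K \<tau> w y else 0)"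
      by (rule sum.cong) auto
    also have "\<dots> = K \<tau> w y" using ay by (simp add: sum.delta')
    also have "\<dots> = 1 / real d" using ay yw op t by (simp add: K_def2)
    finally show "(\<Sum>z\<in>NB w. K \<tau> w z * A T0 0 \<tau> z y) = 1 / real d" .
  qed
  also have "\<dots> = 1 / real d" using Tu by (simp add: set_integral_const)
  finally show ?thesis .
qed

lemma C_bound:
  assumes u: "0 \<le> u" and Tu: "T0 = u + 1" and S: "finite S"
  shows "summable (\<lambda>m. \<Sum>y\<in>S. A T0 m u w y) \<and> (\<Sum>m. \<Sum>y\<in>S. A T0 m u w y) \<le> exp 1 - psi S u w"
proof -
  have uT: "u \<le> T0" using Tu by simp
  define c where "c m = (\<Sum>y\<in>reach adj m w - S. A T0 m u w y)" for m
  have bm: "(\<Sum>y\<in>S. A T0 m u w y) = 1 / fact m - c m" for m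
  proof -
    have "(\<Sum>y\<in>S \<union> (reach adj m w - S). A T0 m u w y) = (T0 - u)^m / fact m"
      by (rule mass) (use uT u S reach_fin in auto)
    moreover have "(\<Sum>y\<in>S \<union> (reach adj m w - S). A T0 m u w y) = (\<Sum>y\<in>S. A T0 m u w y) + c m"
      unfolding c_def by (rule sum.union_disjoint) (use S reach_fin in auto)
    ultimately show ?thesis using Tu by simp
  qed
  have c0: "0 \<le> c m" for m unfolding c_def by (rule sum_nonneg) (simp add: A_nonneg)
  have c1: "c m \<le> 1 / fact m" for m
    using sum_bound[of T0 u "reach adj m w - S" m w] uT u Tu reach_fin unfolding c_def by simp
  have sc: "summable c"
    by (rule summable_comparison_test[OF _ summable_expo[of 1]]) (use c0 c1 in auto)
  have se: "summable (\<lambda>m. 1 / fact m :: real)" using summable_expo[of 1] by simp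
  have sb: "summable (\<lambda>m. \<Sum>y\<in>S. A T0 m u w y)"
    unfolding bm by (rule summable_diff[OF se sc])
  have "(\<Sum>m. \<Sum>y\<in>S. A T0 m u w y) = (\<Sum>m. 1 / fact m) - (\<Sum>m. c m)"
    unfolding bm by (rule suminf_diff[OF se sc, symmetric])
  also have "(\<Sum>m. 1 / fact m :: real) = exp 1" using suminf_expo[of 1] by simp
  finally have eq: "(\<Sum>m. \<Sum>y\<in>S. A T0 m u w y) = exp 1 - (\<Sum>m. c m)" .
  have "(\<Sum>m<2. c m) \<le> (\<Sum>m. c m)" by (rule sum_le_suminf[OF sc]) (use c0 in auto)
  then have c01: "c 0 + c 1 \<le> (\<Sum>m. c m)" by (simp add: numeral_2_eq_2)
  have "psi S u w \<le> c 0 + c 1"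
  proof (cases "w \<in> S")
    case False
    have "{w} - S = {w}" using False by auto
    then have "c 0 = 1" by (simp add: c_def)
    moreover have "psi S u w = 1" using False by (simp add: psi_def)
    ultimately show ?thesis using c0[of 1] by linarith
  next
    case True
    have k1: "kk S u w = (\<Sum>y\<in>Oset S u w. A T0 1 u w y)"
      using A1_open[OF u Tu] by (simp add: kk_def)
    have k2: "(\<Sum>y\<in>Oset S u w. A T0 1 u w y) \<le> c 1" unfolding c_def
    proof (rule sum_mono2)
      show "finite (reach adj 1 w - S)" by (simp add: reach_fin)
      show "Oset S u w \<subseteq> reach adj 1 w - S" by (auto simp: Oset_def)
      show "\<And>b. b \<in> reach adj 1 w - S - Oset S u w \<Longrightarrow> 0 \<le> A T0 1 u w b" by (rule A_nonneg)
    qed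
    have "psi S u w = kk S u w" using True by (simp add: psi_def)
    then show ?thesis using c0[of 0] k1 k2 by linarith
  qed
  then show ?thesis using sb eq c01 by simp
qed

end


lemma swap3:
  fixes f :: "'j \<Rightarrow> 'w \<Rightarrow> real"
  shows "(\<Sum>y\<in>S. \<Sum>j\<in>J. \<Sum>w\<in>W. f j w * g j w y) = (\<Sum>j\<in>J. \<Sum>w\<in>W. f j w * (\<Sum>y\<in>S. g j w y))"
proof -
  have "(\<Sum>y\<in>S. \<Sum>j\<in>J. \<Sum>w\<in>W. f j w * g j w y) = (\<Sum>j\<in>J. \<Sum>y\<in>S. \<Sum>w\<in>W. f j w * g j w y)"
    by (rule sum.swap)
  also have "\<dots> = (\<Sum>j\<in>J. \<Sum>w\<in>W. \<Sum>y\<in>S. f j w * g j w y)"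
    by (rule sum.cong[OF refl], rule sum.swap)
  also have "\<dots> = (\<Sum>j\<in>J. \<Sum>w\<in>W. f j w * (\<Sum>y\<in>S. g j w y))"
    by (simp add: sum_distrib_left)
  finally show ?thesis .
qed

lemma swap2:
  fixes f :: "'w \<Rightarrow> real"
  shows "(\<Sum>m\<in>M. \<Sum>w\<in>W. f w * g m w) = (\<Sum>w\<in>W. f w * (\<Sum>m\<in>M. g m w))"
  by (subst sum.swap) (simp add: sum_distrib_left)

context wsetup begin

lemma stay_bound:
  assumes u: "0 \<le> u" and Tu: "T0 = u + 1" and S: "finite S"
  shows "(\<Sum>x\<in>S. \<Sum>y\<in>S. trans_prob adj eta T0 x y) \<le> real (card S) - exp (-1) * (\<Sum>w\<in>S. kk S u w)"
proof -
  have uT: "u \<le> T0" and T00: "0 \<le> T0" using u Tu by auto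
  define Bd where "Bd = exp u * (exp 1 * real (card S) - (\<Sum>w\<in>S. kk S u w))"
  have sm: "summable (\<lambda>n. A T0 n 0 x y)" for x y by (rule A_summable) (use T00 in auto)
  have part: "(\<Sum>n<N. \<Sum>x\<in>S. \<Sum>y\<in>S. A T0 n 0 x y) \<le> Bd" for N
  proof -
    define W where "W = S \<union> (\<Union>x\<in>S. \<Union>j\<le>N. reach adj j x)"
    have finW: "finite W" using S reach_fin by (auto simp: W_def)
    have SW: "S \<subseteq> W" by (auto simp: W_def)
    have RW: "reach adj j x \<subseteq> W" if "x \<in> S" "j \<le> N" for x j using that by (auto simp: W_def)
    define a where "a j x w = A u j 0 x w" for j x w
    define b where "b m w = (\<Sum>y\<in>S. A T0 m u w y)" for m w
    have a0: "0 \<le> a j x w" for j x w by (simp add: a_def A_nonneg)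
    have b0: "0 \<le> b m w" for m w by (simp add: b_def A_nonneg sum_nonneg)
    have "(\<Sum>n<N. \<Sum>x\<in>S. \<Sum>y\<in>S. A T0 n 0 x y) = (\<Sum>x\<in>S. \<Sum>n<N. \<Sum>y\<in>S. A T0 n 0 x y)"
      by (rule sum.swap)
    also have "\<dots> = (\<Sum>x\<in>S. \<Sum>n<N. \<Sum>j\<le>n. \<Sum>w\<in>W. a j x w * b (n - j) w)"
    proof (intro sum.cong refl)
      fix x n assume x: "x \<in> S" and n: "n \<in> {..<N}"
      have "(\<Sum>y\<in>S. A T0 n 0 x y) = (\<Sum>y\<in>S. \<Sum>j\<le>n. \<Sum>w\<in>W. A u j 0 x w * A T0 (n - j) u w y)"
      proof (rule sum.cong[OF refl])
        fix y assume "y \<in> S"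
        show "A T0 n 0 x y = (\<Sum>j\<le>n. \<Sum>w\<in>W. A u j 0 x w * A T0 (n - j) u w y)"
          by (rule MK[OF order_refl uT]) (use x n RW finW u in auto)
      qed
      also have "\<dots> = (\<Sum>j\<le>n. \<Sum>w\<in>W. a j x w * b (n - j) w)"
        unfolding a_def b_def by (rule swap3)
      finally show "(\<Sum>y\<in>S. A T0 n 0 x y) = (\<Sum>j\<le>n. \<Sum>w\<in>W. a j x w * b (n - j) w)" .
    qed
    also have "\<dots> \<le> (\<Sum>x\<in>S. \<Sum>j<N. \<Sum>m<N. \<Sum>w\<in>W. a j x w * b m w)"
      by (intro sum_mono tri_le sum_nonneg mult_nonneg_nonneg a0 b0)
    also have "\<dots> = (\<Sum>x\<in>S. \<Sum>j<N. \<Sum>w\<in>W. a j x w * (\<Sum>m<N. b m w))"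
      by (simp only: swap2)
    also have "\<dots> \<le> (\<Sum>x\<in>S. \<Sum>j<N. \<Sum>w\<in>W. a j x w * (exp 1 - psi S u w))"
    proof (intro sum_mono mult_left_mono a0)
      fix w
      have cb: "summable (\<lambda>m. b m w) \<and> (\<Sum>m. b m w) \<le> exp 1 - psi S u w"
        unfolding b_def by (rule C_bound[OF u Tu S])
      have "(\<Sum>m<N. b m w) \<le> (\<Sum>m. b m w)"
        by (rule sum_le_suminf) (use cb b0 in auto)
      then show "(\<Sum>m<N. b m w) \<le> exp 1 - psi S u w" using cb by simp
    qed
    also have "\<dots> = (\<Sum>j<N. \<Sum>x\<in>S. \<Sum>w\<in>W. a j x w * (exp 1 - psi S u w))"
      by (rule sum.swap)
    also have "\<dots> = (\<Sum>j<N. (exp 1 - 1) * real (card S) * (u^j / fact j) + (\<Sum>w\<in>S. (\<Sum>x\<in>S. a j x w) * (1 - kk S u w)))"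
    proof (rule sum.cong[OF refl])
      fix j assume j: "j \<in> {..<N}"
      have ma: "(\<Sum>w\<in>W. a j x w) = u^j / fact j" if x: "x \<in> S" for x
        unfolding a_def using mass[OF uT, of 0 W j x] finW RW[OF x, of j] j u by simp
      have ps: "a j x w * (exp 1 - psi S u w) = (exp 1 - 1) * a j x w + (if w \<in> S then a j x w * (1 - kk S u w) else 0)" for x w
        by (simp add: psi_def algebra_simps)
      have "(\<Sum>x\<in>S. \<Sum>w\<in>W. a j x w * (exp 1 - psi S u w)) =
          (\<Sum>x\<in>S. (exp 1 - 1) * (\<Sum>w\<in>W. a j x w) + (\<Sum>w\<in>W. if w \<in> S then a j x w * (1 - kk S u w) else 0))"
        by (simp only: ps sum.distrib sum_distrib_left)
      also have "\<dots> = (\<Sum>x\<in>S. (exp 1 - 1) * (u^j / fact j) + (\<Sum>w\<in>S. a j x w * (1 - kk S u w)))"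
      proof (rule sum.cong[OF refl])
        fix x assume x: "x \<in> S"
        have "(\<Sum>w\<in>W. if w \<in> S then a j x w * (1 - kk S u w) else 0) = (\<Sum>w\<in>W \<inter> S. a j x w * (1 - kk S u w))"
          by (rule sum.inter_restrict[symmetric, OF finW])
        also have "W \<inter> S = S" using SW by blast
        finally show "(exp 1 - 1) * (\<Sum>w\<in>W. a j x w) + (\<Sum>w\<in>W. if w \<in> S then a j x w * (1 - kk S u w) else 0) =
            (exp 1 - 1) * (u^j / fact j) + (\<Sum>w\<in>S. a j x w * (1 - kk S u w))"
          using ma[OF x] by simp
      qed
      also have "\<dots> = (exp 1 - 1) * real (card S) * (u^j / fact j) + (\<Sum>w\<in>S. (\<Sum>x\<in>S. a j x w) * (1 - kk S u w))"
      proof -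
        have "(\<Sum>x\<in>S. (exp 1 - 1) * (u^j / fact j) + (\<Sum>w\<in>S. a j x w * (1 - kk S u w))) =
            (\<Sum>x\<in>S. (exp 1 - 1) * (u^j / fact j)) + (\<Sum>x\<in>S. \<Sum>w\<in>S. a j x w * (1 - kk S u w))"
          by (rule sum.distrib)
        also have "(\<Sum>x\<in>S. \<Sum>w\<in>S. a j x w * (1 - kk S u w)) = (\<Sum>w\<in>S. \<Sum>x\<in>S. a j x w * (1 - kk S u w))"
          by (rule sum.swap)
        also have "\<dots> = (\<Sum>w\<in>S. (\<Sum>x\<in>S. a j x w) * (1 - kk S u w))"
          by (simp only: sum_distrib_right)
        finally show ?thesis by (simp add: mult_ac)
      qed
      finally show "(\<Sum>x\<in>S. \<Sum>w\<in>W. a j x w * (exp 1 - psi S u w)) =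
          (exp 1 - 1) * real (card S) * (u^j / fact j) + (\<Sum>w\<in>S. (\<Sum>x\<in>S. a j x w) * (1 - kk S u w))" .
    qed
    also have "\<dots> = (exp 1 - 1) * real (card S) * (\<Sum>j<N. u^j / fact j) + (\<Sum>w\<in>S. (1 - kk S u w) * (\<Sum>j<N. \<Sum>x\<in>S. a j x w))"
    proof -
      have "(\<Sum>j<N. (exp 1 - 1) * real (card S) * (u^j / fact j) + (\<Sum>w\<in>S. (\<Sum>x\<in>S. a j x w) * (1 - kk S u w))) =
          (\<Sum>j<N. (exp 1 - 1) * real (card S) * (u^j / fact j)) + (\<Sum>j<N. \<Sum>w\<in>S. (\<Sum>x\<in>S. a j x w) * (1 - kk S u w))"
        by (rule sum.distrib)
      also have "(\<Sum>j<N. (exp 1 - 1) * real (card S) * (u^j / fact j)) = (exp 1 - 1) * real (card S) * (\<Sum>j<N. u^j / fact j)"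
        by (simp only: sum_distrib_left)
      also have "(\<Sum>j<N. \<Sum>w\<in>S. (\<Sum>x\<in>S. a j x w) * (1 - kk S u w)) = (\<Sum>w\<in>S. \<Sum>j<N. (\<Sum>x\<in>S. a j x w) * (1 - kk S u w))"
        by (rule sum.swap)
      also have "\<dots> = (\<Sum>w\<in>S. (1 - kk S u w) * (\<Sum>j<N. \<Sum>x\<in>S. a j x w))"
        by (rule sum.cong[OF refl], subst sum_distrib_right[symmetric], rule mult.commute)
      finally show ?thesis .
    qed
    also have "\<dots> \<le> (exp 1 - 1) * real (card S) * exp u + (\<Sum>w\<in>S. (1 - kk S u w) * exp u)"
    proof (rule add_mono)
      have eu: "(\<Sum>j<N. u^j / fact j) \<le> exp u"
        using sum_le_suminf[OF summable_expo[of u], of "{..<N}"] u suminf_expo[of u] by auto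
      have e1: "0 \<le> exp 1 - (1::real)" by simp
      show "(exp 1 - 1) * real (card S) * (\<Sum>j<N. u^j / fact j) \<le> (exp 1 - 1) * real (card S) * exp u"
        by (rule mult_left_mono[OF eu]) (use e1 in simp)
      show "(\<Sum>w\<in>S. (1 - kk S u w) * (\<Sum>j<N. \<Sum>x\<in>S. a j x w)) \<le> (\<Sum>w\<in>S. (1 - kk S u w) * exp u)"
      proof (intro sum_mono mult_left_mono)
        fix w
        show "0 \<le> 1 - kk S u w" using kk_le1 by simp
        have "(\<Sum>j<N. \<Sum>x\<in>S. a j x w) \<le> (\<Sum>j<N. u^j / fact j)"
          unfolding a_def by (rule sum_mono) (use colsum[OF uT, of 0 S] u S in simp)
        then show "(\<Sum>j<N. \<Sum>x\<in>S. a j x w) \<le> exp u" using eu by simp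
      qed
    qed
    also have "\<dots> = Bd"
      by (simp add: Bd_def sum_distrib_right[symmetric] sum_subtractf algebra_simps sum_distrib_left)
    finally show ?thesis .
  qed
  have "(\<Sum>x\<in>S. \<Sum>y\<in>S. trans_prob adj eta T0 x y) = exp (- T0) * (\<Sum>x\<in>S. \<Sum>y\<in>S. \<Sum>n. A T0 n 0 x y)"
    by (simp add: trans_prob_def sum_distrib_left)
  also have "(\<Sum>x\<in>S. \<Sum>y\<in>S. \<Sum>n. A T0 n 0 x y) = (\<Sum>n. \<Sum>x\<in>S. \<Sum>y\<in>S. A T0 n 0 x y)"
  proof -
    have "(\<Sum>x\<in>S. \<Sum>y\<in>S. \<Sum>n. A T0 n 0 x y) = (\<Sum>x\<in>S. \<Sum>n. \<Sum>y\<in>S. A T0 n 0 x y)"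
      by (rule sum.cong[OF refl], rule suminf_sum[symmetric], rule sm)
    also have "\<dots> = (\<Sum>n. \<Sum>x\<in>S. \<Sum>y\<in>S. A T0 n 0 x y)"
      by (rule suminf_sum[symmetric], rule summable_sum, rule sm)
    finally show ?thesis .
  qed
  also have "exp (- T0) * (\<Sum>n. \<Sum>x\<in>S. \<Sum>y\<in>S. A T0 n 0 x y) \<le> exp (- T0) * Bd"
    by (rule mult_left_mono, rule suminf_le_const) (auto intro!: summable_sum sm part)
  also have "exp (- T0) * Bd = real (card S) - exp (-1) * (\<Sum>w\<in>S. kk S u w)"
  proof -
    have "exp (- T0) * exp u = exp (-1)" using Tu by (simp add: exp_add[symmetric])
    moreover have "exp (-1) * exp 1 = (1::real)" by (simp add: exp_minus)
    ultimately have e1: "exp (- T0) * exp u = exp (-1)" and e2: "exp (-1) * exp 1 = (1::real)" by auto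
    have "exp (- T0) * Bd = (exp (- T0) * exp u) * (exp 1 * real (card S) - (\<Sum>w\<in>S. kk S u w))"
      by (simp add: Bd_def mult.assoc)
    also have "\<dots> = exp (-1) * (exp 1 * real (card S) - (\<Sum>w\<in>S. kk S u w))" using e1 by simp
    also have "\<dots> = (exp (-1) * exp 1) * real (card S) - exp (-1) * (\<Sum>w\<in>S. kk S u w)"
      by (simp add: algebra_simps)
    also have "\<dots> = real (card S) - exp (-1) * (\<Sum>w\<in>S. kk S u w)" using e2 by simp
    finally show ?thesis .
  qed
  finally show ?thesis .
qed

end


context wsetup begin

lemma open_count:
  assumes S: "finite S"
  shows "card {e\<in>edge_boundary adj S. \<forall>t\<in>{u..T0}. eta t e} = (\<Sum>w\<in>S. card (Oset S u w))"
proof -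
  define P where "P = Sigma S (Oset S u)"
  define \<phi> where "\<phi> = (\<lambda>(w::'v, y::'v). {w, y})"
  have cP: "card P = (\<Sum>w\<in>S. card (Oset S u w))"
    unfolding P_def using S Oset_fin by simp
  have inj: "inj_on \<phi> P"
    unfolding inj_on_def P_def \<phi>_def by (auto simp: Oset_def doubleton_eq_iff)
  have img: "\<phi> ` P = {e\<in>edge_boundary adj S. \<forall>t\<in>{u..T0}. eta t e}"
  proof
    show "\<phi> ` P \<subseteq> {e\<in>edge_boundary adj S. \<forall>t\<in>{u..T0}. eta t e}"
      unfolding P_def \<phi>_def by (auto simp: Oset_def edge_boundary_def) blast
    show "{e\<in>edge_boundary adj S. \<forall>t\<in>{u..T0}. eta t e} \<subseteq> \<phi> ` P"
    proof
      fix e assume e: "e \<in> {e\<in>edge_boundary adj S. \<forall>t\<in>{u..T0}. eta t e}"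
      then obtain x y where xy: "e = {x, y}" "adj x y" "x \<in> S" "y \<notin> S"
        by (auto simp: edge_boundary_def)
      have "(x, y) \<in> P" using e xy by (auto simp: P_def Oset_def)
      moreover have "\<phi> (x, y) = e" using xy by (simp add: \<phi>_def)
      ultimately show "e \<in> \<phi> ` P" by (metis image_eqI)
    qed
  qed
  have "card (\<phi> ` P) = card P" by (rule card_image[OF inj])
  then show ?thesis using img cP by simp
qed

end

theorem mainTheorem19:
  fixes adj :: "'v \<Rightarrow> 'v \<Rightarrow> bool" and d :: nat and S :: "'v set"
    and p \<mu> \<beta> :: real and eta :: "real \<Rightarrow> 'v set \<Rightarrow> bool"
  assumes "simple_graph adj" and "connected_graph adj" and "locally_finite adj"
    and "nonamenable adj" and "vertex_transitive adj"
    and "\<forall>v. degree adj v = d" and "d \<ge> 3"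
    and "finite S" and "S \<noteq> {}"
    and "0 < p" and "p \<le> 1"
    and "0 < \<mu>" and "\<mu> \<le> 1/2"
    and "env_path adj (1/\<mu>) eta"
    and "\<beta> > 0"
    and "real (card {e\<in>edge_boundary adj S. \<forall>t\<in>{1/\<mu> - 1 .. 1/\<mu>}. eta t e})
           \<ge> \<beta> * real (card (edge_boundary adj S))"
  shows "quenched_escape adj eta (1/\<mu>) S \<ge> \<beta> / (real d * exp 1) * cheeger adj"
proof -
  note sg = assms(1) and lf = assms(3) and deg = assms(6) and d3 = assms(7) and finS = assms(8)
    and Sne = assms(9) and mu0 = assms(12) and mu1 = assms(13) and env = assms(14) and b0 = assms(15)
    and hyp = assms(16)
  interpret W: wsetup adj d eta "1/\<mu>"
    by unfold_locales (use sg lf deg d3 env in auto)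
  define u where "u = 1/\<mu> - 1"
  have T2: "2 \<le> 1/\<mu>" using mu0 mu1 by (simp add: field_simps)
  have u0: "0 \<le> u" and Tu: "1/\<mu> = u + 1" using T2 by (auto simp: u_def)
  define cS where "cS = real (card S)"
  have cS0: "cS > 0" using finS Sne by (simp add: cS_def card_gt_0_iff)
  define B where "B = real (card (edge_boundary adj S))"
  define Kt where "Kt = real (card {e\<in>edge_boundary adj S. \<forall>t\<in>{1/\<mu> - 1 .. 1/\<mu>}. eta t e})"
  have dpos: "real d \<ge> 1" using d3 by simp
  have B0: "0 \<le> B" by (simp add: B_def)
  have sumkk: "(\<Sum>w\<in>S. W.kk S u w) = Kt / real d"
  proof -
    have "Kt = real (\<Sum>w\<in>S. card (W.Oset S u w))"
      unfolding Kt_def u_def using W.open_count[OF finS, of "1/\<mu> - 1"] by simp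
    then show ?thesis by (simp add: W.kk_def sum_divide_distrib)
  qed
  have esc: "quenched_escape adj eta (1/\<mu>) S \<ge> exp (-1) * Kt / (real d * cS)"
  proof -
    have "(\<Sum>x\<in>S. 1 - (\<Sum>y\<in>S. trans_prob adj eta (1/\<mu>) x y)) \<le> (\<Sum>x\<in>S. infsum (\<lambda>y. trans_prob adj eta (1/\<mu>) x y) (- S))"
      by (rule sum_mono, rule W.row_escape) (use T2 finS mu0 in auto)
    moreover have "(\<Sum>x\<in>S. 1 - (\<Sum>y\<in>S. trans_prob adj eta (1/\<mu>) x y)) = cS - (\<Sum>x\<in>S. \<Sum>y\<in>S. trans_prob adj eta (1/\<mu>) x y)"
      by (simp add: sum_subtractf cS_def)
    moreover have "(\<Sum>x\<in>S. \<Sum>y\<in>S. trans_prob adj eta (1/\<mu>) x y) \<le> cS - exp (-1) * (Kt / real d)"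
      using W.stay_bound[OF u0 Tu finS] sumkk by (simp add: cS_def)
    ultimately have "exp (-1) * (Kt / real d) \<le> (\<Sum>x\<in>S. infsum (\<lambda>y. trans_prob adj eta (1/\<mu>) x y) (- S))"
      by linarith
    then have "exp (-1) * (Kt / real d) / cS \<le> (\<Sum>x\<in>S. infsum (\<lambda>y. trans_prob adj eta (1/\<mu>) x y) (- S)) / cS"
      by (rule divide_right_mono) (use cS0 in simp)
    moreover have "quenched_escape adj eta (1/\<mu>) S = (\<Sum>x\<in>S. infsum (\<lambda>y. trans_prob adj eta (1/\<mu>) x y) (- S)) / cS"
      by (simp add: quenched_escape_def cS_def)
    moreover have "exp (-1) * Kt / (real d * cS) = exp (-1) * (Kt / real d) / cS" by simp
    ultimately show ?thesis by linarith
  qed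
  have ch: "cheeger adj \<le> B / (real d * cS)"
  proof -
    have mem: "B / (real d * cS) \<in> {real (card (edge_boundary adj W)) / real (\<Sum>v\<in>W. degree adj v) | W.
                        finite W \<and> W \<noteq> {}}"
    proof -
      have "real (\<Sum>v\<in>S. degree adj v) = real d * cS" using deg by (simp add: cS_def)
      then have eqd: "B / (real d * cS) = real (card (edge_boundary adj S)) / real (\<Sum>v\<in>S. degree adj v)"
        by (simp add: B_def)
      show ?thesis by (intro CollectI exI[of _ S] conjI eqd finS Sne)
    qed
    have bdd: "bdd_below {real (card (edge_boundary adj W)) / real (\<Sum>v\<in>W. degree adj v) | W.
                        finite W \<and> W \<noteq> {}}"
    proof (rule bdd_belowI[where m=0])
      fix x assume "x \<in> {real (card (edge_boundary adj W)) / real (\<Sum>v\<in>W. degree adj v) | W.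
                        finite W \<and> W \<noteq> {}}"
      then obtain W where "x = real (card (edge_boundary adj W)) / real (\<Sum>v\<in>W. degree adj v)" by blast
      then show "0 \<le> x" by (simp del: of_nat_sum)
    qed
    show ?thesis unfolding cheeger_def by (rule cInf_lower[OF mem bdd])
  qed
  have Kt_ge: "\<beta> * B \<le> Kt" using hyp by (simp add: Kt_def B_def)
  have c1: "\<beta> / (real d * exp 1) * cheeger adj \<le> \<beta> / (real d * exp 1) * (B / (real d * cS))"
    by (rule mult_left_mono[OF ch]) (use b0 dpos in simp)
  also have "\<dots> = (\<beta> * B) / (real d * cS) * (exp (-1) / real d)"
    by (simp add: exp_minus field_simps)
  also have "\<dots> \<le> (\<beta> * B) / (real d * cS) * exp (-1)"
  proof (rule mult_left_mono)
    show "exp (-1) / real d \<le> exp (-1)" using dpos by (simp add: divide_le_eq)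
    show "0 \<le> \<beta> * B / (real d * cS)" using b0 B0 cS0 dpos by simp
  qed
  also have "\<dots> \<le> Kt / (real d * cS) * exp (-1)"
    by (intro mult_right_mono divide_right_mono Kt_ge) (use cS0 dpos in simp_all)
  also have "\<dots> = exp (-1) * Kt / (real d * cS)" by simp
  also have "\<dots> \<le> quenched_escape adj eta (1/\<mu>) S" by (rule esc)
  finally show ?thesis .
qed

end
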